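(* Let $N$ be a stepwise NFTA and $h$ the homomorphism from the free forest algebra over $\Sigma$ to the transition algebra $\mathcal{F}_N$ determined by $h(a_\Box)=\{\mathrm{SIG}(\lambda)\mid\lambda\text{ is a valid run of }N\text{ on }a_\Box\}$ for all $a\in\Sigma$. Then for every nonempty forest or context $D$ over $\Sigma$, $h(D)=\{\mathrm{SIG}(\lambda)\mid\lambda\text{ is a valid run of }N\text{ on }D\}$.
   Context: A stepwise NFTA is $N=(Q,\Sigma,\delta,\mathsf{Init},q_0,q_F)$, $\delta\subseteq Q^3$, transition $(q_1,q_2,q_3)$ written $q_1\xrightarrow{q_2}q_3$. A run on a forest $F$ assigns to each node $v$ a transition $\lambda_{\mathsf{pre}}(v)\xrightarrow{\lambda_{\mathsf{self}}(v)}\lambda_{\mathsf{post}}(v)\in\delta$ such that: $\lambda_{\mathsf{pre}}(v)\in\mathsf{Init}(\mathrm{lab}(\mathrm{parent}(v)))$ if $v$ is a non-root first child; $\lambda_{\mathsf{pre}}(v)=\lambda_{\mathsf{post}}(w)$ if $w$ is the left sibling of $v$ (including consecutive roots); $\lambda_{\mathsf{self}}(v)\in\mathsf{Init}(\mathrm{lab}(v))$ if $v$ is a leaf; $\lambda_{\mathsf{self}}(v)=\lambda_{\mathsf{post}}(w)$ if $w$ is the last child of $v$; $\lambda_{\mathsf{pre}}$ of the leftmost root is arbitrary. Runs on a context are defined the same way for the extended automaton with a fresh state $q_\Box$, $\mathsf{Init}(\Box)=\{q_\Box\}$ for the hole $\Box$, and additional transitions $(Q\setminus\{q_\Box\})\times\{q_\Box\}\times(Q\setminus\{q_\Box\})$.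 For a run with roots $v_1\le\dots\le v_k$, $\mathrm{SIG}(\lambda)=(\lambda_{\mathsf{pre}}(v_1),\lambda_{\mathsf{post}}(v_k))$ for a forest and $((\lambda_{\mathsf{pre}}(v_1),\lambda_{\mathsf{post}}(v_k)),(\lambda_{\mathsf{pre}}(\Box),\lambda_{\mathsf{post}}(\Box)))$ for a context. $a_\Box$ denotes the context consisting of an $a$-labelled root whose only child is the hole. The transition algebra $\mathcal{F}_N$ has forest elements $2^{Q^2}$, context elements $2^{(Q^2)^2}$, neutral elements $\mathrm{id}_Q$, $\mathrm{id}_{Q^2}$, and operations: $F_1\oplus F_2=\{(q_1,q_3)\mid(q_1,q_2)\in F_1,(q_2,q_3)\in F_2\}$; $C_1\odot C_2=\{((q_1,q_2),(q_5,q_6))\mid((q_1,q_2),(q_3,q_4))\in C_1,((q_3,q_4),(q_5,q_6))\in C_2\}$; $C\odot F=\{(q_1,q_2)\mid((q_1,q_2),(q_3,q_4))\in C,(q_3,q_4)\in F\}$; $F\oplus C=\{((q_1,q_3),(q_4,q_5))\mid(q_1,q_2)\in F,((q_2,q_3),(q_4,q_5))\in C\}$; $C\oplus F=\{((q_1,q_5),(q_3,q_4))\mid((q_1,q_2),(q_3,q_4))\in C,(q_2,q_5)\in F\}$. The free forest algebra consists of all forests and contexts over $\Sigma$ with concatenation and context application (substituting for the hole); a homomorphism preserves all these operations and neutral elements, and is determined by its values on the contexts $a_\Box$. *)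

theory Defs
  imports Main
begin

datatype 'a tree = Node 'a "'a tree list" | Hole

type_synonym 'a forest = "'a tree list"

fun holes_t :: "'a tree \<Rightarrow> nat" where
  "holes_t Hole = 1"
| "holes_t (Node a ts) = sum_list (map holes_t ts)"

definition holes :: "'a forest \<Rightarrow> nat" where
  "holes F = sum_list (map holes_t F)"

definition is_forest :: "'a forest \<Rightarrow> bool" where
  "is_forest F \<longleftrightarrow> holes F = 0"

definition is_context :: "'a forest \<Rightarrow> bool" where
  "is_context C \<longleftrightarrow> holes C = 1"

fun subst_t :: "'a tree \<Rightarrow> 'a forest \<Rightarrow> 'a forest" where
  "subst_t Hole D = D"
| "subst_t (Node a ts) D = [Node a (concat (map (\<lambda>t. subst_t t D) ts))]"

definition subst :: "'a forest \<Rightarrow> 'a forest \<Rightarrow> 'a forest" where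
  "subst C D = concat (map (\<lambda>t. subst_t t D) C)"

definition box_ctx :: "'a \<Rightarrow> 'a forest" where
  "box_ctx a = [Node a [Hole]]"

text \<open>A node is addressed by a nonempty list [i0,i1,...,ik]: root i0, then child i1, etc.\<close>
fun subf :: "'a forest \<Rightarrow> nat list \<Rightarrow> 'a tree option" where
  "subf F [] = None"
| "subf F (i # p) =
     (if i < length F then
        (case p of [] \<Rightarrow> Some (F ! i)
         | _ \<Rightarrow> (case F ! i of Node a ts \<Rightarrow> subf ts p | Hole \<Rightarrow> None))
      else None)"

definition nodes :: "'a forest \<Rightarrow> nat list set" where
  "nodes F = {v. subf F v \<noteq> None}"

fun lab :: "'a tree \<Rightarrow> 'a option" where
  "lab (Node a ts) = Some a"
| "lab Hole = None"

fun nchild :: "'a tree \<Rightarrow> nat" where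
  "nchild (Node a ts) = length ts"
| "nchild Hole = 0"

text \<open>A run assigns to each node a transition (pre, self, post). Generic over the state type
's, a transition set Delta and an initial-state function I on labels (None = hole label).\<close>

type_synonym 's trans = "'s \<times> 's \<times> 's"

definition pre :: "'s trans \<Rightarrow> 's" where "pre t = fst t"
definition self :: "'s trans \<Rightarrow> 's" where "self t = fst (snd t)"
definition post :: "'s trans \<Rightarrow> 's" where "post t = snd (snd t)"

definition valid_run ::
  "'s trans set \<Rightarrow> ('a option \<Rightarrow> 's set) \<Rightarrow> 'a forest \<Rightarrow> (nat list \<Rightarrow> 's trans) \<Rightarrow> bool" where
  "valid_run \<Delta> I F run \<longleftrightarrow>
     (\<forall>v \<in> nodes F. run v \<in> \<Delta>)
   \<and> (\<forall>p t. p \<noteq> [] \<and> p @ [0] \<in> nodes F \<and> subf F p = Some t \<longrightarrow> pre (run (p @ [0])) \<in> I (lab t))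
   \<and> (\<forall>p i. p @ [Suc i] \<in> nodes F \<longrightarrow> pre (run (p @ [Suc i])) = post (run (p @ [i])))
   \<and> (\<forall>v t. subf F v = Some t \<and> nchild t = 0 \<longrightarrow> self (run v) \<in> I (lab t))
   \<and> (\<forall>v t. subf F v = Some t \<and> nchild t > 0 \<longrightarrow> self (run v) = post (run (v @ [nchild t - 1])))"

definition init_forest :: "('a \<Rightarrow> 'q set) \<Rightarrow> 'a option \<Rightarrow> 'q set" where
  "init_forest Init x = (case x of Some a \<Rightarrow> Init a | None \<Rightarrow> {})"

text \<open>Contexts: the extended automaton with fresh state q_Box, encoded as None :: 'q option.\<close>
definition delta_ext :: "'q trans set \<Rightarrow> 'q option trans set" where
  "delta_ext \<delta> = {(Some p, Some q, Some r) | p q r. (p, q, r) \<in> \<delta>}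
                \<union> {(Some p, None, Some r) | p r. True}"

definition init_ext :: "('a \<Rightarrow> 'q set) \<Rightarrow> 'a option \<Rightarrow> 'q option set" where
  "init_ext Init x = (case x of Some a \<Rightarrow> Some ` Init a | None \<Rightarrow> {None})"

definition forest_sigs :: "'q trans set \<Rightarrow> ('a \<Rightarrow> 'q set) \<Rightarrow> 'a forest \<Rightarrow> ('q \<times> 'q) set" where
  "forest_sigs \<delta> Init F =
     {(p, q). \<exists>run. valid_run \<delta> (init_forest Init) F run
                 \<and> pre (run [0]) = p \<and> post (run [length F - 1]) = q}"

definition ctx_sigs ::
  "'q trans set \<Rightarrow> ('a \<Rightarrow> 'q set) \<Rightarrow> 'a forest \<Rightarrow> (('q \<times> 'q) \<times> ('q \<times> 'q)) set" where
  "ctx_sigs \<delta> Init C =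
     {((p, q), (r, s)). \<exists>run hp. valid_run (delta_ext \<delta>) (init_ext Init) C run
                 \<and> subf C hp = Some Hole
                 \<and> pre (run [0]) = Some p \<and> post (run [length C - 1]) = Some q
                 \<and> pre (run hp) = Some r \<and> post (run hp) = Some s}"

definition fplus :: "('q \<times> 'q) set \<Rightarrow> ('q \<times> 'q) set \<Rightarrow> ('q \<times> 'q) set" where
  "fplus F1 F2 = {(q1, q3) | q1 q2 q3. (q1, q2) \<in> F1 \<and> (q2, q3) \<in> F2}"

definition ccomp ::
  "(('q \<times> 'q) \<times> ('q \<times> 'q)) set \<Rightarrow> (('q \<times> 'q) \<times> ('q \<times> 'q)) set \<Rightarrow> (('q \<times> 'q) \<times> ('q \<times> 'q)) set" where
  "ccomp C1 C2 = {((q1, q2), (q5, q6)) | q1 q2 q3 q4 q5 q6.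
                    ((q1, q2), (q3, q4)) \<in> C1 \<and> ((q3, q4), (q5, q6)) \<in> C2}"

definition capp :: "(('q \<times> 'q) \<times> ('q \<times> 'q)) set \<Rightarrow> ('q \<times> 'q) set \<Rightarrow> ('q \<times> 'q) set" where
  "capp C F = {(q1, q2) | q1 q2 q3 q4. ((q1, q2), (q3, q4)) \<in> C \<and> (q3, q4) \<in> F}"

definition fcplus ::
  "('q \<times> 'q) set \<Rightarrow> (('q \<times> 'q) \<times> ('q \<times> 'q)) set \<Rightarrow> (('q \<times> 'q) \<times> ('q \<times> 'q)) set" where
  "fcplus F C = {((q1, q3), (q4, q5)) | q1 q2 q3 q4 q5.
                   (q1, q2) \<in> F \<and> ((q2, q3), (q4, q5)) \<in> C}"

definition cfplus ::
  "(('q \<times> 'q) \<times> ('q \<times> 'q)) set \<Rightarrow> ('q \<times> 'q) set \<Rightarrow> (('q \<times> 'q) \<times> ('q \<times> 'q)) set" where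
  "cfplus C F = {((q1, q5), (q3, q4)) | q1 q2 q3 q4 q5.
                   ((q1, q2), (q3, q4)) \<in> C \<and> (q2, q5) \<in> F}"

definition is_hom ::
  "('a forest \<Rightarrow> ('q \<times> 'q) set) \<Rightarrow> ('a forest \<Rightarrow> (('q \<times> 'q) \<times> ('q \<times> 'q)) set) \<Rightarrow> bool" where
  "is_hom hF hC \<longleftrightarrow>
     hF [] = Id \<and> hC [Hole] = Id
   \<and> (\<forall>F1 F2. is_forest F1 \<and> is_forest F2 \<longrightarrow> hF (F1 @ F2) = fplus (hF F1) (hF F2))
   \<and> (\<forall>C1 C2. is_context C1 \<and> is_context C2 \<longrightarrow> hC (subst C1 C2) = ccomp (hC C1) (hC C2))
   \<and> (\<forall>C F. is_context C \<and> is_forest F \<longrightarrow> hF (subst C F) = capp (hC C) (hF F))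
   \<and> (\<forall>F C. is_forest F \<and> is_context C \<longrightarrow> hC (F @ C) = fcplus (hF F) (hC C))
   \<and> (\<forall>C F. is_context C \<and> is_forest F \<longrightarrow> hC (C @ F) = cfplus (hC C) (hF F))"

end

theory Submission
  imports Defs
begin


lemma pre_simp[simp]: "pre (a,b,c) = a" and self_simp[simp]: "self (a,b,c) = b"
  and post_simp[simp]: "post (a,b,c) = c"
  by (simp_all add: pre_def self_def post_def)

lemma subf_Cons: "subf F (i # p) = (if i < length F then (if p = [] then Some (F ! i)
   else (case F ! i of Node a ts \<Rightarrow> subf ts p | Hole \<Rightarrow> None)) else None)"
  by (cases p) auto

declare subf.simps(2)[simp del]

lemma subf_hd: "subf F v = Some t \<Longrightarrow> v \<noteq> [] \<and> hd v < length F"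
  by (cases v) (auto simp: subf_Cons split: if_splits)

lemma subf_K: "i < length F \<Longrightarrow> F ! i = Node a ts \<Longrightarrow> p \<noteq> [] \<Longrightarrow> subf F (i # p) = subf ts p"
  by (simp add: subf_Cons)

lemma subf_cases: "subf F v = Some t \<Longrightarrow> (\<exists>i. v = [i] \<and> i < length F \<and> t = F ! i)
   \<or> (\<exists>i p a ts. v = i # p \<and> p \<noteq> [] \<and> i < length F \<and> F ! i = Node a ts \<and> subf ts p = Some t \<and> ts \<noteq> [])"
proof -
  assume h: "subf F v = Some t"
  then obtain i p where v: "v = i # p" by (cases v) auto
  show ?thesis
  proof (cases "p = []")
    case True then show ?thesis using h v by (auto simp: subf_Cons split: if_splits)
  next
    case False
    have il: "i < length F" using h v by (auto simp: subf_Cons split: if_splits)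
    show ?thesis
    proof (cases "F ! i")
      case (Node a ts)
      then have "subf ts p = Some t" using h v il False by (simp add: subf_Cons)
      moreover then have "ts \<noteq> []" using subf_hd by fastforce
      ultimately show ?thesis using v il False Node by blast
    next
      case Hole then show ?thesis using h v il False by (simp add: subf_Cons)
    qed
  qed
qed

definition vloc where
  "vloc \<Delta> I F run i \<longleftrightarrow> run [i] \<in> \<Delta> \<and> (i > 0 \<longrightarrow> pre (run [i]) = post (run [i - 1]))
    \<and> (case F ! i of Hole \<Rightarrow> self (run [i]) \<in> I None
       | Node a ts \<Rightarrow> (ts = [] \<longrightarrow> self (run [i]) \<in> I (Some a))
          \<and> (ts \<noteq> [] \<longrightarrow> pre (run [i, 0]) \<in> I (Some a) \<and> self (run [i]) = post (run [i, length ts - 1])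
               \<and> valid_run \<Delta> I ts (\<lambda>v. run (i # v))))"

lemma valid_run_rec: "valid_run \<Delta> I F run \<longleftrightarrow> (\<forall>i<length F. vloc \<Delta> I F run i)"
proof
  assume V: "valid_run \<Delta> I F run"
  have V1: "\<And>v. v \<in> nodes F \<Longrightarrow> run v \<in> \<Delta>"
   and V2: "\<And>p t. p \<noteq> [] \<Longrightarrow> p @ [0] \<in> nodes F \<Longrightarrow> subf F p = Some t \<Longrightarrow> pre (run (p @ [0])) \<in> I (lab t)"
   and V3: "\<And>p i. p @ [Suc i] \<in> nodes F \<Longrightarrow> pre (run (p @ [Suc i])) = post (run (p @ [i]))"
   and V4: "\<And>v t. subf F v = Some t \<Longrightarrow> nchild t = 0 \<Longrightarrow> self (run v) \<in> I (lab t)"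
   and V5: "\<And>v t. subf F v = Some t \<Longrightarrow> nchild t > 0 \<Longrightarrow> self (run v) = post (run (v @ [nchild t - 1]))"
    using V unfolding valid_run_def by blast+
  show "\<forall>i<length F. vloc \<Delta> I F run i"
  proof (intro allI impI)
    fix i assume il: "i < length F"
    have n1: "[i] \<in> nodes F" using il by (simp add: nodes_def subf_Cons)
    have a1: "run [i] \<in> \<Delta>" using V1[OF n1] .
    have a2: "i > 0 \<longrightarrow> pre (run [i]) = post (run [i - 1])"
      using V3[of "[]" "i - 1"] n1 by (cases i) auto
    have a3: "case F ! i of Hole \<Rightarrow> self (run [i]) \<in> I None
       | Node a ts \<Rightarrow> (ts = [] \<longrightarrow> self (run [i]) \<in> I (Some a))
          \<and> (ts \<noteq> [] \<longrightarrow> pre (run [i, 0]) \<in> I (Some a) \<and> self (run [i]) = post (run [i, length ts - 1])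
               \<and> valid_run \<Delta> I ts (\<lambda>v. run (i # v)))"
    proof (cases "F ! i")
      case Hole
      then show ?thesis using V4[of "[i]" Hole] il by (simp add: subf_Cons)
    next
      case (Node a ts)
      have s1: "subf F [i] = Some (Node a ts)" using il Node by (simp add: subf_Cons)
      have K: "\<And>p. p \<noteq> [] \<Longrightarrow> subf F (i # p) = subf ts p" using subf_K[OF il Node] .
      have b1: "ts = [] \<longrightarrow> self (run [i]) \<in> I (Some a)" using V4[OF s1] by simp
      have b2: "ts \<noteq> [] \<longrightarrow> pre (run [i, 0]) \<in> I (Some a)"
      proof
        assume ne: "ts \<noteq> []"
        have "[i] @ [0] \<in> nodes F" using K[of "[0]"] ne by (simp add: nodes_def subf_Cons)
        then show "pre (run [i, 0]) \<in> I (Some a)" using V2[of "[i]", OF _ _ s1] by simp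
      qed
      have b3: "ts \<noteq> [] \<longrightarrow> self (run [i]) = post (run [i, length ts - 1])"
        using V5[OF s1] by simp
      have b4: "valid_run \<Delta> I ts (\<lambda>v. run (i # v))"
      proof -
        have sK: "\<And>p t. subf ts p = Some t \<Longrightarrow> subf F (i # p) = Some t"
        proof -
          fix p t assume "subf ts p = Some t"
          moreover then have "p \<noteq> []" using subf_hd by blast
          ultimately show "subf F (i # p) = Some t" using K by simp
        qed
        have nK: "\<And>p. p \<in> nodes ts \<Longrightarrow> i # p \<in> nodes F"
          using sK unfolding nodes_def by blast
        show ?thesis unfolding valid_run_def
        proof (intro conjI allI impI ballI)
          fix v assume "v \<in> nodes ts" then show "run (i # v) \<in> \<Delta>" using V1 nK by blast
        next
          fix p t assume h: "p \<noteq> [] \<and> p @ [0] \<in> nodes ts \<and> subf ts p = Some t"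
          then show "pre (run (i # p @ [0])) \<in> I (lab t)"
            using V2[of "i # p" t] nK sK by simp
        next
          fix p j assume h: "p @ [Suc j] \<in> nodes ts"
          then show "pre (run (i # p @ [Suc j])) = post (run (i # p @ [j]))"
            using V3[of "i # p" j] nK by simp
        next
          fix v t assume h: "subf ts v = Some t \<and> nchild t = 0"
          then show "self (run (i # v)) \<in> I (lab t)" using V4 sK by blast
        next
          fix v t assume h: "subf ts v = Some t \<and> 0 < nchild t"
          then show "self (run (i # v)) = post (run (i # v @ [nchild t - 1]))"
            using V5[of "i # v" t] sK by simp
        qed
      qed
      show ?thesis using Node b1 b2 b3 b4 by simp
    qed
    show "vloc \<Delta> I F run i" unfolding vloc_def using a1 a2 a3 by blast
  qed
next
  assume H: "\<forall>i<length F. vloc \<Delta> I F run i"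
  have Hi: "\<And>i a ts. i < length F \<Longrightarrow> F ! i = Node a ts \<Longrightarrow> ts \<noteq> [] \<Longrightarrow> valid_run \<Delta> I ts (\<lambda>v. run (i # v))"
    using H unfolding vloc_def by fastforce
  show "valid_run \<Delta> I F run" unfolding valid_run_def
  proof (intro conjI allI impI ballI)
    fix v assume "v \<in> nodes F"
    then obtain t where "subf F v = Some t" by (auto simp: nodes_def)
    then show "run v \<in> \<Delta>"
    proof (rule subf_cases[THEN disjE])
      assume "\<exists>i. v = [i] \<and> i < length F \<and> t = F ! i"
      then show ?thesis using H unfolding vloc_def by auto
    next
      assume "\<exists>i p a ts. v = i # p \<and> p \<noteq> [] \<and> i < length F \<and> F ! i = Node a ts \<and> subf ts p = Some t \<and> ts \<noteq> []"
      then obtain i p a ts where *: "v = i # p" "i < length F" "F ! i = Node a ts" "subf ts p = Some t" "ts \<noteq> []" by blast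
      then show ?thesis using Hi[OF *(2,3,5)] unfolding valid_run_def nodes_def by auto
    qed
  next
    fix p t assume h: "p \<noteq> [] \<and> p @ [0] \<in> nodes F \<and> subf F p = Some t"
    then have "subf F p = Some t" by blast
    then show "pre (run (p @ [0])) \<in> I (lab t)"
    proof (rule subf_cases[THEN disjE])
      assume "\<exists>i. p = [i] \<and> i < length F \<and> t = F ! i"
      then obtain i where *: "p = [i]" "i < length F" "t = F ! i" by blast
      then obtain a ts where N: "F ! i = Node a ts" "ts \<noteq> []" using h
        by (cases "F ! i") (auto simp: nodes_def subf_Cons split: if_splits)
      show ?thesis using H *(2) N * unfolding vloc_def by auto
    next
      assume "\<exists>i p' a ts. p = i # p' \<and> p' \<noteq> [] \<and> i < length F \<and> F ! i = Node a ts \<and> subf ts p' = Some t \<and> ts \<noteq> []"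
      then obtain i p' a ts where *: "p = i # p'" "p' \<noteq> []" "i < length F" "F ! i = Node a ts" "subf ts p' = Some t" "ts \<noteq> []" by blast
      have "p' @ [0] \<in> nodes ts" using h * subf_K[OF *(3,4), of "p' @ [0]"] by (simp add: nodes_def)
      then show ?thesis using Hi[OF *(3,4,6)] * unfolding valid_run_def by auto
    qed
  next
    fix p j assume h: "p @ [Suc j] \<in> nodes F"
    show "pre (run (p @ [Suc j])) = post (run (p @ [j]))"
    proof (cases p)
      case Nil
      then have "Suc j < length F" using h by (simp add: nodes_def subf_Cons split: if_splits)
      then show ?thesis using H Nil unfolding vloc_def by fastforce
    next
      case (Cons i p')
      then obtain t where "subf F (i # (p' @ [Suc j])) = Some t" using h by (auto simp: nodes_def)
      from subf_cases[OF this] obtain a ts where *: "i < length F" "F ! i = Node a ts"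
         "subf ts (p' @ [Suc j]) = Some t" "ts \<noteq> []" by auto
      then show ?thesis using Hi[OF *(1,2,4)] Cons unfolding valid_run_def nodes_def by auto
    qed
  next
    fix v t assume h: "subf F v = Some t \<and> nchild t = 0"
    then have "subf F v = Some t" by blast
    then show "self (run v) \<in> I (lab t)"
    proof (rule subf_cases[THEN disjE])
      assume "\<exists>i. v = [i] \<and> i < length F \<and> t = F ! i"
      then obtain i where *: "v = [i]" "i < length F" "t = F ! i" by blast
      show ?thesis using H[rule_format, OF *(2)] h * unfolding vloc_def by (cases "F ! i") auto
    next
      assume "\<exists>i p a ts. v = i # p \<and> p \<noteq> [] \<and> i < length F \<and> F ! i = Node a ts \<and> subf ts p = Some t \<and> ts \<noteq> []"
      then obtain i p a ts where *: "v = i # p" "i < length F" "F ! i = Node a ts" "subf ts p = Some t" "ts \<noteq> []" by blast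
      then show ?thesis using Hi[OF *(2,3,5)] h unfolding valid_run_def by auto
    qed
  next
    fix v t assume h: "subf F v = Some t \<and> 0 < nchild t"
    then have "subf F v = Some t" by blast
    then show "self (run v) = post (run (v @ [nchild t - 1]))"
    proof (rule subf_cases[THEN disjE])
      assume "\<exists>i. v = [i] \<and> i < length F \<and> t = F ! i"
      then obtain i where *: "v = [i]" "i < length F" "t = F ! i" by blast
      show ?thesis using H[rule_format, OF *(2)] h * unfolding vloc_def by (cases "F ! i") auto
    next
      assume "\<exists>i p a ts. v = i # p \<and> p \<noteq> [] \<and> i < length F \<and> F ! i = Node a ts \<and> subf ts p = Some t \<and> ts \<noteq> []"
      then obtain i p a ts where *: "v = i # p" "i < length F" "F ! i = Node a ts" "subf ts p = Some t" "ts \<noteq> []" by blast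
      then show ?thesis using Hi[OF *(2,3,5)] h unfolding valid_run_def by auto
    qed
  qed
qed


lemma valid_run_cong:
  assumes "\<And>i p. i < length F \<Longrightarrow> r (i # p) = r' (i # p)"
  shows "valid_run \<Delta> I F r = valid_run \<Delta> I F r'"
proof -
  have "vloc \<Delta> I F r i = vloc \<Delta> I F r' i" if il: "i < length F" for i
  proof -
    have e1: "\<And>p. r (i # p) = r' (i # p)" using assms il by blast
    have e1': "(\<lambda>v. r (i # v)) = (\<lambda>v. r' (i # v))" using e1 by blast
    have e2: "r [i - Suc 0] = r' [i - Suc 0]" using assms il by simp
    show ?thesis unfolding vloc_def by (cases "F ! i") (simp_all add: e1 e1' e2)
  qed
  then show ?thesis by (simp add: valid_run_rec)
qed

definition shft :: "nat \<Rightarrow> nat list \<Rightarrow> nat list" where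
  "shft n v = (case v of [] \<Rightarrow> [] | i # p \<Rightarrow> (i + n) # p)"

lemma shft_Cons[simp]: "shft n (i # p) = (i + n) # p" by (simp add: shft_def)

lemma all_less_add_split: "(\<forall>i<(n::nat) + m. P i) \<longleftrightarrow> (\<forall>i<n. P i) \<and> (\<forall>j<m. P (j + n))"
proof
  assume h: "\<forall>i<n + m. P i"
  have 1: "\<forall>i<n. P i"
  proof (intro allI impI)
    fix i assume "i < n" then have "i < n + m" by simp
    then show "P i" using h by blast
  qed
  have 2: "\<forall>j<m. P (j + n)"
  proof (intro allI impI)
    fix j assume "j < m" then have "j + n < n + m" by simp
    then show "P (j + n)" using h by blast
  qed
  show "(\<forall>i<n. P i) \<and> (\<forall>j<m. P (j + n))" using 1 2 by blast
next
  assume h: "(\<forall>i<n. P i) \<and> (\<forall>j<m. P (j + n))"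
  show "\<forall>i<n + m. P i"
  proof (intro allI impI)
    fix i assume i: "i < n + m"
    show "P i"
    proof (cases "i < n")
      case True then show ?thesis using h by blast
    next
      case False
      then have "i - n < m" "i - n + n = i" using i by auto
      then show ?thesis using h by metis
    qed
  qed
qed

lemma valid_run_append:
  "valid_run \<Delta> I (F1 @ F2) run \<longleftrightarrow> valid_run \<Delta> I F1 run
     \<and> valid_run \<Delta> I F2 (\<lambda>v. run (shft (length F1) v))
     \<and> (F1 \<noteq> [] \<and> F2 \<noteq> [] \<longrightarrow> pre (run [length F1]) = post (run [length F1 - 1]))"
proof -
  let ?n = "length F1" and ?m = "length F2"
  have A: "\<And>i. i < ?n \<Longrightarrow> vloc \<Delta> I (F1 @ F2) run i = vloc \<Delta> I F1 run i"
    by (simp add: vloc_def nth_append)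
  have B: "\<And>j. j < ?m \<Longrightarrow> vloc \<Delta> I (F1 @ F2) run (j + ?n) =
      (vloc \<Delta> I F2 (\<lambda>v. run (shft ?n v)) j \<and> (j = 0 \<and> ?n > 0 \<longrightarrow> pre (run [?n]) = post (run [?n - 1])))"
  proof -
    fix j assume "j < ?m"
    have e: "(F1 @ F2) ! (j + ?n) = F2 ! j" by (simp add: nth_append)
    have e2: "j > 0 \<Longrightarrow> j + ?n - 1 = (j - 1) + ?n" by simp
    show "?thesis j" unfolding vloc_def e by (cases "F2 ! j"; cases j) (simp_all add: e2, blast+)
  qed
  have "valid_run \<Delta> I (F1 @ F2) run \<longleftrightarrow> (\<forall>i<?n. vloc \<Delta> I (F1 @ F2) run i) \<and> (\<forall>j<?m. vloc \<Delta> I (F1 @ F2) run (j + ?n))"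
    by (simp add: valid_run_rec all_less_add_split)
  also have "\<dots> \<longleftrightarrow> (\<forall>i<?n. vloc \<Delta> I F1 run i) \<and> (\<forall>j<?m. vloc \<Delta> I F2 (\<lambda>v. run (shft ?n v)) j \<and> (j = 0 \<and> ?n > 0 \<longrightarrow> pre (run [?n]) = post (run [?n - 1])))"
    using A B by auto
  also have "\<dots> \<longleftrightarrow> valid_run \<Delta> I F1 run
     \<and> valid_run \<Delta> I F2 (\<lambda>v. run (shft ?n v))
     \<and> (F1 \<noteq> [] \<and> F2 \<noteq> [] \<longrightarrow> pre (run [?n]) = post (run [?n - 1]))"
    by (auto simp: valid_run_rec)
  finally show ?thesis .
qed

lemma valid_run_single: "valid_run \<Delta> I [t] run \<longleftrightarrow> vloc \<Delta> I [t] run 0"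
  by (simp add: valid_run_rec)

lemma node_iff: "valid_run \<Delta> I [Node a ts] run \<longleftrightarrow> run [0] \<in> \<Delta> \<and> (ts = [] \<longrightarrow> self (run [0]) \<in> I (Some a))
   \<and> (ts \<noteq> [] \<longrightarrow> pre (run [0, 0]) \<in> I (Some a) \<and> self (run [0]) = post (run [0, length ts - 1])
        \<and> valid_run \<Delta> I ts (\<lambda>v. run (0 # v)))"
  by (simp add: valid_run_single vloc_def)

lemma hole_iff: "valid_run \<Delta> I [Hole] run \<longleftrightarrow> run [0] \<in> \<Delta> \<and> self (run [0]) \<in> I None"
  by (simp add: valid_run_single vloc_def)

definition mrg :: "nat \<Rightarrow> (nat list \<Rightarrow> 's) \<Rightarrow> (nat list \<Rightarrow> 's) \<Rightarrow> nat list \<Rightarrow> 's" where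
  "mrg n r1 r2 v = (case v of [] \<Rightarrow> r1 [] | i # p \<Rightarrow> if i < n then r1 (i # p) else r2 ((i - n) # p))"

lemma mrg_lt[simp]: "i < n \<Longrightarrow> mrg n r1 r2 (i # p) = r1 (i # p)" by (simp add: mrg_def)
lemma mrg_ge[simp]: "mrg n r1 r2 ((i + n) # p) = r2 (i # p)" by (simp add: mrg_def)

lemma append_ex:
  assumes "valid_run \<Delta> I F1 r1" "valid_run \<Delta> I F2 r2"
    "F1 \<noteq> [] \<Longrightarrow> F2 \<noteq> [] \<Longrightarrow> pre (r2 [0]) = post (r1 [length F1 - 1])"
  shows "valid_run \<Delta> I (F1 @ F2) (mrg (length F1) r1 r2)"
proof -
  have 1: "valid_run \<Delta> I F1 (mrg (length F1) r1 r2)"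
    using assms(1) valid_run_cong[of F1 "mrg (length F1) r1 r2" r1] by simp
  have 2: "valid_run \<Delta> I F2 (\<lambda>v. mrg (length F1) r1 r2 (shft (length F1) v))"
    using assms(2) valid_run_cong[of F2 "\<lambda>v. mrg (length F1) r1 r2 (shft (length F1) v)" r2] by simp
  have 3: "F1 \<noteq> [] \<and> F2 \<noteq> [] \<longrightarrow> pre (mrg (length F1) r1 r2 [length F1]) = post (mrg (length F1) r1 r2 [length F1 - 1])"
    using assms(3) mrg_ge[of "length F1" r1 r2 0 "[]"] by simp
  show ?thesis using 1 2 3 valid_run_append by blast
qed

lemma subf_append: "subf (F1 @ F2) (i # p) = (if i < length F1 then subf F1 (i # p) else subf F2 ((i - length F1) # p))"
  by (auto simp: subf_Cons nth_append)

definition nd :: "'s \<Rightarrow> (nat list \<Rightarrow> 's) \<Rightarrow> nat list \<Rightarrow> 's" where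
  "nd T r v = (if v = [0] then T else r (tl v))"

lemma node_ex:
  assumes "ts \<noteq> []" "valid_run \<Delta> I ts r" "T \<in> \<Delta>" "pre (r [0]) \<in> I (Some a)"
    "self T = post (r [length ts - 1])"
  shows "valid_run \<Delta> I [Node a ts] (nd T r)"
proof -
  have "valid_run \<Delta> I ts (\<lambda>v. nd T r (0 # v))"
    using assms(2) valid_run_cong[of ts "\<lambda>v. nd T r (0 # v)" r] by (simp add: nd_def)
  then show ?thesis using assms by (simp add: node_iff nd_def)
qed

lemma nd_simps[simp]: "nd T r [0] = T" "w \<noteq> [] \<Longrightarrow> nd T r (0 # w) = r w"
  by (auto simp: nd_def)

lemma hole_node: "subf [Node a ts] hp = Some Hole \<longleftrightarrow> (\<exists>w. hp = 0 # w \<and> subf ts w = Some Hole)"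
  by (cases hp) (auto simp: subf_Cons)

lemma hole_hole: "subf [Hole] hp = Some Hole \<longleftrightarrow> hp = [0]"
  by (cases hp) (auto simp: subf_Cons)


lemma holes_nth: "i < length F \<Longrightarrow> holes_t (F ! i) \<le> holes F"
  unfolding holes_def using elem_le_sum_list[of i "map holes_t F"] by simp

lemma hole_pos: "subf F v = Some Hole \<Longrightarrow> holes F > 0"
proof (induction v arbitrary: F)
  case Nil then show ?case by simp
next
  case (Cons i p)
  have il: "i < length F" using Cons.prems by (simp add: subf_Cons split: if_splits)
  show ?case
  proof (cases "p = []")
    case True
    then have "F ! i = Hole" using Cons.prems il by (simp add: subf_Cons)
    then show ?thesis using holes_nth[OF il] by simp
  next
    case False
    then obtain b us where N: "F ! i = Node b us" "subf us p = Some Hole" using Cons.prems il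
      by (cases "F ! i") (auto simp: subf_Cons)
    have "holes us > 0" using Cons.IH[OF N(2)] .
    then show ?thesis using holes_nth[OF il] N(1) by (simp add: holes_def)
  qed
qed

lemma subf_snoc: "subf F v = Some (Node a ts) \<Longrightarrow> k < length ts \<Longrightarrow> subf F (v @ [k]) = Some (ts ! k)"
proof (induction v arbitrary: F)
  case Nil then show ?case by simp
next
  case (Cons i p)
  have il: "i < length F" using Cons.prems by (simp add: subf_Cons split: if_splits)
  show ?case
  proof (cases "p = []")
    case True
    then have "F ! i = Node a ts" using Cons.prems il by (simp add: subf_Cons)
    then show ?thesis using il True Cons.prems(2) by (simp add: subf_Cons)
  next
    case False
    then obtain b us where N: "F ! i = Node b us" "subf us p = Some (Node a ts)" using Cons.prems il
      by (cases "F ! i") (auto simp: subf_Cons)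
    show ?thesis using Cons.IH[OF N(2) Cons.prems(2)] il N(1) by (simp add: subf_Cons)
  qed
qed

lemma de_Some[simp]: "(Some p, Some s, Some q) \<in> delta_ext \<delta> \<longleftrightarrow> (p, s, q) \<in> \<delta>"
  by (auto simp: delta_ext_def)

lemma de_hole[simp]: "(Some p, None, Some q) \<in> delta_ext \<delta>"
  by (auto simp: delta_ext_def)

lemma de_elim: "x \<in> delta_ext \<delta> \<Longrightarrow> \<exists>p q. pre x = Some p \<and> post x = Some q"
  by (auto simp: delta_ext_def)

lemma init_lift: "x \<in> init_forest Init l \<Longrightarrow> Some x \<in> init_ext Init l"
  by (cases l) (auto simp: init_forest_def init_ext_def)

lemma init_ext_Some[simp]: "init_ext Init (Some a) = Some ` Init a"
  by (simp add: init_ext_def)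
lemma init_ext_None[simp]: "init_ext Init None = {None}"
  by (simp add: init_ext_def)
lemma init_forest_Some[simp]: "init_forest Init (Some a) = Init a"
  by (simp add: init_forest_def)

lemma valid_node: "valid_run \<Delta> I F r \<Longrightarrow> v \<in> nodes F \<Longrightarrow> r v \<in> \<Delta>"
  by (simp add: valid_run_def)

lemma root_node: "i < length F \<Longrightarrow> [i] \<in> nodes F"
  by (simp add: nodes_def subf_Cons)

lemma lift1:
  assumes "valid_run \<delta> (init_forest Init) F r"
  shows "valid_run (delta_ext \<delta>) (init_ext Init) F (\<lambda>v. (Some (pre (r v)), Some (self (r v)), Some (post (r v))))"
  using assms unfolding valid_run_def
  by (auto simp: init_lift simp del: init_ext_Some init_forest_Some)
    (metis prod.collapse pre_def self_def post_def)

lemma lift2: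
  assumes h0: "holes F = 0" and V: "valid_run (delta_ext \<delta>) (init_ext Init) F r"
  shows "valid_run \<delta> (init_forest Init) F (\<lambda>v. (the (pre (r v)), the (self (r v)), the (post (r v))))
     \<and> (\<forall>v\<in>nodes F. pre (r v) \<noteq> None \<and> post (r v) \<noteq> None)"
proof -
  have V1: "\<And>v. v \<in> nodes F \<Longrightarrow> r v \<in> delta_ext \<delta>"
   and V2: "\<And>p t. p \<noteq> [] \<Longrightarrow> p @ [0] \<in> nodes F \<Longrightarrow> subf F p = Some t \<Longrightarrow> pre (r (p @ [0])) \<in> init_ext Init (lab t)"
   and V3: "\<And>p i. p @ [Suc i] \<in> nodes F \<Longrightarrow> pre (r (p @ [Suc i])) = post (r (p @ [i]))"
   and V4: "\<And>v t. subf F v = Some t \<Longrightarrow> nchild t = 0 \<Longrightarrow> self (r v) \<in> init_ext Init (lab t)"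
   and V5: "\<And>v t. subf F v = Some t \<Longrightarrow> nchild t > 0 \<Longrightarrow> self (r v) = post (r (v @ [nchild t - 1]))"
    using V unfolding valid_run_def by blast+
  have NH: "\<And>v t. subf F v = Some t \<Longrightarrow> \<exists>a ts. t = Node a ts"
  proof -
    fix v t assume "subf F v = Some t"
    then show "\<exists>a ts. t = Node a ts" using hole_pos[of F v] h0 by (cases t) auto
  qed
  have PP: "\<And>v. v \<in> nodes F \<Longrightarrow> pre (r v) \<noteq> None \<and> post (r v) \<noteq> None"
    using V1 de_elim by fastforce
  have SS: "\<And>v. v \<in> nodes F \<Longrightarrow> self (r v) \<noteq> None"
  proof -
    fix v assume vn: "v \<in> nodes F"
    then obtain t where st: "subf F v = Some t" by (auto simp: nodes_def)
    then obtain a ts where t: "t = Node a ts" using NH by blast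
    show "self (r v) \<noteq> None"
    proof (cases "ts = []")
      case True then show ?thesis using V4[OF st] t by auto
    next
      case False
      then have "subf F (v @ [nchild t - 1]) = Some (ts ! (length ts - 1))"
        using subf_snoc[of F v a ts "length ts - 1"] st t by simp
      then have "v @ [nchild t - 1] \<in> nodes F" by (simp add: nodes_def)
      then show ?thesis using V5[OF st] PP t False by simp
    qed
  qed
  have R: "\<And>v. v \<in> nodes F \<Longrightarrow> r v = (Some (the (pre (r v))), Some (the (self (r v))), Some (the (post (r v))))"
    using PP SS by (metis option.collapse prod.collapse pre_def self_def post_def)
  have "valid_run \<delta> (init_forest Init) F (\<lambda>v. (the (pre (r v)), the (self (r v)), the (post (r v))))"
    unfolding valid_run_def
  proof (intro conjI allI impI ballI)
    fix v assume vn: "v \<in> nodes F"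
    then show "(the (pre (r v)), the (self (r v)), the (post (r v))) \<in> \<delta>"
      using V1[OF vn] R[OF vn] by (metis de_Some)
  next
    fix p t assume h: "p \<noteq> [] \<and> p @ [0] \<in> nodes F \<and> subf F p = Some t"
    then obtain a ts where t: "t = Node a ts" using NH by blast
    have "pre (r (p @ [0])) \<in> Some ` Init a" using V2[of p t] h t by simp
    then show "pre (the (pre (r (p @ [0]))), the (self (r (p @ [0]))), the (post (r (p @ [0])))) \<in> init_forest Init (lab t)"
      using t by auto
  next
    fix p i assume h: "p @ [Suc i] \<in> nodes F"
    then show "pre (the (pre (r (p @ [Suc i]))), the (self (r (p @ [Suc i]))), the (post (r (p @ [Suc i])))) =
       post (the (pre (r (p @ [i]))), the (self (r (p @ [i]))), the (post (r (p @ [i]))))"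
      using V3 by simp
  next
    fix v t assume h: "subf F v = Some t \<and> nchild t = 0"
    then obtain a ts where t: "t = Node a ts" using NH by blast
    have "self (r v) \<in> Some ` Init a" using V4[of v t] h t by simp
    then show "self (the (pre (r v)), the (self (r v)), the (post (r v))) \<in> init_forest Init (lab t)"
      using t by auto
  next
    fix v t assume h: "subf F v = Some t \<and> 0 < nchild t"
    then show "self (the (pre (r v)), the (self (r v)), the (post (r v))) =
        post (the (pre (r (v @ [nchild t - 1]))), the (self (r (v @ [nchild t - 1]))), the (post (r (v @ [nchild t - 1]))))"
      using V5 by simp
  qed
  then show ?thesis using PP by blast
qed


lemma fsI: "valid_run \<delta> (init_forest Init) F run \<Longrightarrow> pre (run [0]) = p \<Longrightarrow> post (run [length F - 1]) = q
   \<Longrightarrow> (p, q) \<in> forest_sigs \<delta> Init F"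
  by (auto simp: forest_sigs_def)

lemma fsE: "(p, q) \<in> forest_sigs \<delta> Init F \<Longrightarrow>
  (\<And>run. valid_run \<delta> (init_forest Init) F run \<Longrightarrow> pre (run [0]) = p \<Longrightarrow> post (run [length F - 1]) = q \<Longrightarrow> P) \<Longrightarrow> P"
  by (auto simp: forest_sigs_def)

lemma csI: "valid_run (delta_ext \<delta>) (init_ext Init) C run \<Longrightarrow> subf C hp = Some Hole
  \<Longrightarrow> pre (run [0]) = Some p \<Longrightarrow> post (run [length C - 1]) = Some q
  \<Longrightarrow> pre (run hp) = Some r \<Longrightarrow> post (run hp) = Some s \<Longrightarrow> ((p, q), (r, s)) \<in> ctx_sigs \<delta> Init C"
  unfolding ctx_sigs_def by blast

lemma csE: "((p, q), (r, s)) \<in> ctx_sigs \<delta> Init C \<Longrightarrow>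
  (\<And>run hp. valid_run (delta_ext \<delta>) (init_ext Init) C run \<Longrightarrow> subf C hp = Some Hole
  \<Longrightarrow> pre (run [0]) = Some p \<Longrightarrow> post (run [length C - 1]) = Some q
  \<Longrightarrow> pre (run hp) = Some r \<Longrightarrow> post (run hp) = Some s \<Longrightarrow> P) \<Longrightarrow> P"
  unfolding ctx_sigs_def by blast

lemma box_sigs: "ctx_sigs \<delta> Init (box_ctx a) = {((p, q), (r, s)). (p, s, q) \<in> \<delta> \<and> r \<in> Init a}"
proof (intro set_eqI iffI)
  fix x assume "x \<in> ctx_sigs \<delta> Init (box_ctx a)"
  then obtain p q r s where x: "x = ((p, q), (r, s))" "((p, q), (r, s)) \<in> ctx_sigs \<delta> Init (box_ctx a)"
    by (metis prod.collapse)
  from x(2) obtain run hp where V: "valid_run (delta_ext \<delta>) (init_ext Init) [Node a [Hole]] run"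
    and hp: "subf [Node a [Hole]] hp = Some Hole"
    and s: "pre (run [0]) = Some p" "post (run [0]) = Some q" "pre (run hp) = Some r" "post (run hp) = Some s"
    by (elim csE) (auto simp: box_ctx_def)
  have hp0: "hp = [0, 0]" using hp by (auto simp: hole_node hole_hole)
  from V have V': "run [0] \<in> delta_ext \<delta>" "pre (run [0, 0]) \<in> Some ` Init a"
     "self (run [0]) = post (run [0, 0])" "valid_run (delta_ext \<delta>) (init_ext Init) [Hole] (\<lambda>v. run (0 # v))"
    by (simp_all add: node_iff)
  have "run [0] = (Some p, Some s, Some q)" using s V'(3) hp0
    by (metis prod.collapse pre_def self_def post_def)
  then have "(p, s, q) \<in> \<delta>" using V'(1) by simp
  moreover have "r \<in> Init a" using V'(2) s(3) hp0 by auto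
  ultimately show "x \<in> {((p, q), (r, s)). (p, s, q) \<in> \<delta> \<and> r \<in> Init a}" using x by simp
next
  fix x assume "x \<in> {((p, q), (r, s)). (p, s, q) \<in> \<delta> \<and> r \<in> Init a}"
  then obtain p q r s where x: "x = ((p, q), (r, s))" "(p, s, q) \<in> \<delta>" "r \<in> Init a" by blast
  let ?r0 = "\<lambda>_::nat list. (Some r, None :: 'a option, Some s)"
  have v0: "valid_run (delta_ext \<delta>) (init_ext Init) [Hole] ?r0" by (simp add: hole_iff)
  have V: "valid_run (delta_ext \<delta>) (init_ext Init) [Node a [Hole]] (nd (Some p, Some s, Some q) ?r0)"
    by (rule node_ex[OF _ v0]) (use x in auto)
  have "((p, q), (r, s)) \<in> ctx_sigs \<delta> Init [Node a [Hole]]"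
    by (rule csI[OF V, of "[0, 0]"]) (auto simp: subf_Cons)
  then show "x \<in> ctx_sigs \<delta> Init (box_ctx a)" using x by (simp add: box_ctx_def)
qed


lemma sig_leaf: "forest_sigs \<delta> Init [Node a []] = {(p, q). \<exists>s. (p, s, q) \<in> \<delta> \<and> s \<in> Init a}"
proof (intro set_eqI iffI)
  fix x assume "x \<in> forest_sigs \<delta> Init [Node a []]"
  then obtain p q where x: "x = (p, q)" "(p, q) \<in> forest_sigs \<delta> Init [Node a []]" by (metis prod.collapse)
  from x(2) obtain run where V: "valid_run \<delta> (init_forest Init) [Node a []] run"
    "pre (run [0]) = p" "post (run [0]) = q" by (elim fsE) auto
  then have "run [0] \<in> \<delta>" "self (run [0]) \<in> Init a" by (simp_all add: node_iff)
  then show "x \<in> {(p, q). \<exists>s. (p, s, q) \<in> \<delta> \<and> s \<in> Init a}" using V x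
    by (auto simp: pre_def post_def self_def) (metis prod.collapse)
next
  fix x assume "x \<in> {(p, q). \<exists>s. (p, s, q) \<in> \<delta> \<and> s \<in> Init a}"
  then obtain p q s where x: "x = (p, q)" "(p, s, q) \<in> \<delta>" "s \<in> Init a" by blast
  have "valid_run \<delta> (init_forest Init) [Node a []] (\<lambda>_. (p, s, q))" using x by (simp add: node_iff)
  then show "x \<in> forest_sigs \<delta> Init [Node a []]" using x by (auto intro: fsI)
qed

lemma sig_node: assumes ne: "ts \<noteq> []"
  shows "forest_sigs \<delta> Init [Node a ts] = {(p, q). \<exists>r s. (p, s, q) \<in> \<delta> \<and> r \<in> Init a \<and> (r, s) \<in> forest_sigs \<delta> Init ts}"
proof (intro set_eqI iffI)
  fix x assume "x \<in> forest_sigs \<delta> Init [Node a ts]"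
  then obtain p q where x: "x = (p, q)" "(p, q) \<in> forest_sigs \<delta> Init [Node a ts]" by (metis prod.collapse)
  from x(2) obtain run where V: "valid_run \<delta> (init_forest Init) [Node a ts] run"
    "pre (run [0]) = p" "post (run [0]) = q" by (elim fsE) auto
  then have W: "run [0] \<in> \<delta>" "pre (run [0, 0]) \<in> Init a" "self (run [0]) = post (run [0, length ts - 1])"
    "valid_run \<delta> (init_forest Init) ts (\<lambda>v. run (0 # v))" using ne by (simp_all add: node_iff)
  have "(pre (run [0, 0]), self (run [0])) \<in> forest_sigs \<delta> Init ts"
    by (rule fsI[OF W(4)]) (simp_all add: W(3))
  moreover have "(p, self (run [0]), q) \<in> \<delta>" using W(1) V(2,3)
    by (metis prod.collapse pre_def self_def post_def)
  ultimately show "x \<in> {(p, q). \<exists>r s. (p, s, q) \<in> \<delta> \<and> r \<in> Init a \<and> (r, s) \<in> forest_sigs \<delta> Init ts}"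
    using x W(2) by blast
next
  fix x assume "x \<in> {(p, q). \<exists>r s. (p, s, q) \<in> \<delta> \<and> r \<in> Init a \<and> (r, s) \<in> forest_sigs \<delta> Init ts}"
  then obtain p q r s where x: "x = (p, q)" "(p, s, q) \<in> \<delta>" "r \<in> Init a" "(r, s) \<in> forest_sigs \<delta> Init ts" by blast
  from x(4) obtain r0 where R: "valid_run \<delta> (init_forest Init) ts r0" "pre (r0 [0]) = r"
    "post (r0 [length ts - 1]) = s" by (elim fsE) auto
  have "valid_run \<delta> (init_forest Init) [Node a ts] (nd (p, s, q) r0)"
    by (rule node_ex[OF ne R(1)]) (use x R in auto)
  then show "x \<in> forest_sigs \<delta> Init [Node a ts]" using x by (auto intro: fsI)
qed

lemma sig_hole: fixes Init :: "'l \<Rightarrow> 'q set" shows "ctx_sigs \<delta> Init ([Hole] :: 'l forest) = Id"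
proof (intro set_eqI iffI)
  fix x assume "x \<in> ctx_sigs \<delta> Init [Hole]"
  then obtain p q r s where x: "x = ((p, q), (r, s))" "((p, q), (r, s)) \<in> ctx_sigs \<delta> Init [Hole]"
    by (metis prod.collapse)
  from x(2) obtain run hp where V: "valid_run (delta_ext \<delta>) (init_ext Init) ([Hole] :: 'l forest) run" and hp: "subf ([Hole] :: 'l forest) hp = Some Hole"
    and s: "pre (run [0]) = Some p" "post (run [0]) = Some q" "pre (run hp) = Some r" "post (run hp) = Some s"
    by (elim csE) force
  then show "x \<in> Id" using x by (auto simp: hole_hole)
next
  fix x :: "('q \<times> 'q) \<times> ('q \<times> 'q)" assume "x \<in> Id"
  then obtain p q where x: "x = ((p, q), (p, q))" by auto
  have "valid_run (delta_ext \<delta>) (init_ext Init) ([Hole] :: 'l forest) (\<lambda>_. (Some p, None, Some q))"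
    by (simp add: hole_iff)
  then show "x \<in> ctx_sigs \<delta> Init [Hole]" unfolding x
    by (rule csI[where hp="[0]"]) (auto simp: subf_Cons)
qed

lemma sig_cnode: assumes ne: "ts \<noteq> []"
  shows "ctx_sigs \<delta> Init [Node a ts] = {((p, q), (r', s')). \<exists>r s. (p, s, q) \<in> \<delta> \<and> r \<in> Init a \<and> ((r, s), (r', s')) \<in> ctx_sigs \<delta> Init ts}"
proof (intro set_eqI iffI)
  fix x assume "x \<in> ctx_sigs \<delta> Init [Node a ts]"
  then obtain p q r' s' where x: "x = ((p, q), (r', s'))" "((p, q), (r', s')) \<in> ctx_sigs \<delta> Init [Node a ts]"
    by (metis prod.collapse)
  from x(2) obtain run hp where V: "valid_run (delta_ext \<delta>) (init_ext Init) [Node a ts] run"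
    and hp: "subf [Node a ts] hp = Some Hole"
    and s: "pre (run [0]) = Some p" "post (run [0]) = Some q" "pre (run hp) = Some r'" "post (run hp) = Some s'"
    by (elim csE) auto
  obtain w where w: "hp = 0 # w" "subf ts w = Some Hole" using hp by (auto simp: hole_node)
  have W: "run [0] \<in> delta_ext \<delta>" "pre (run [0, 0]) \<in> Some ` Init a" "self (run [0]) = post (run [0, length ts - 1])"
    "valid_run (delta_ext \<delta>) (init_ext Init) ts (\<lambda>v. run (0 # v))" using V ne by (simp_all add: node_iff)
  obtain r where r: "pre (run [0, 0]) = Some r" "r \<in> Init a" using W(2) by auto
  have "run [0, length ts - 1] \<in> delta_ext \<delta>"
    using valid_node[OF W(4) root_node[of "length ts - 1" ts]] ne by simp
  then obtain s where ss: "post (run [0, length ts - 1]) = Some s" using de_elim by blast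
  have "((r, s), (r', s')) \<in> ctx_sigs \<delta> Init ts"
    by (rule csI[OF W(4) w(2)]) (use r ss s w in auto)
  moreover have "(p, s, q) \<in> \<delta>"
  proof -
    have "run [0] = (Some p, Some s, Some q)" using s(1,2) W(3) ss
      by (metis prod.collapse pre_def self_def post_def)
    then show ?thesis using W(1) by simp
  qed
  ultimately show "x \<in> {((p, q), (r', s')). \<exists>r s. (p, s, q) \<in> \<delta> \<and> r \<in> Init a \<and> ((r, s), (r', s')) \<in> ctx_sigs \<delta> Init ts}"
    using x r(2) by blast
next
  fix x assume "x \<in> {((p, q), (r', s')). \<exists>r s. (p, s, q) \<in> \<delta> \<and> r \<in> Init a \<and> ((r, s), (r', s')) \<in> ctx_sigs \<delta> Init ts}"
  then obtain p q r' s' r s where x: "x = ((p, q), (r', s'))" "(p, s, q) \<in> \<delta>" "r \<in> Init a"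
    "((r, s), (r', s')) \<in> ctx_sigs \<delta> Init ts" by blast
  from x(4) obtain r0 w where R: "valid_run (delta_ext \<delta>) (init_ext Init) ts r0" "subf ts w = Some Hole"
    "pre (r0 [0]) = Some r" "post (r0 [length ts - 1]) = Some s" "pre (r0 w) = Some r'" "post (r0 w) = Some s'"
    by (elim csE) auto
  have wne: "w \<noteq> []" using R(2) by auto
  have V: "valid_run (delta_ext \<delta>) (init_ext Init) [Node a ts] (nd (Some p, Some s, Some q) r0)"
    by (rule node_ex[OF ne R(1)]) (use x R in auto)
  have "((p, q), (r', s')) \<in> ctx_sigs \<delta> Init [Node a ts]"
    by (rule csI[OF V, of "0 # w"]) (use R wne in \<open>auto simp: subf_Cons\<close>)
  then show "x \<in> ctx_sigs \<delta> Init [Node a ts]" using x by simp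
qed


lemma subf_shft: "subf (F1 @ F2) ((i + length F1) # p) = subf F2 (i # p)"
  by (simp add: subf_append)

lemma len_app: "F2 \<noteq> [] \<Longrightarrow> length (F1 @ F2) - 1 = (length F2 - 1) + length F1"
  by (cases F2) auto

lemma sig_app: assumes ne1: "F1 \<noteq> []" and ne2: "F2 \<noteq> []"
  shows "forest_sigs \<delta> Init (F1 @ F2) = fplus (forest_sigs \<delta> Init F1) (forest_sigs \<delta> Init F2)"
proof (intro set_eqI iffI)
  fix x assume "x \<in> forest_sigs \<delta> Init (F1 @ F2)"
  then obtain p q where x: "x = (p, q)" "(p, q) \<in> forest_sigs \<delta> Init (F1 @ F2)" by (metis prod.collapse)
  from x(2) obtain run where V: "valid_run \<delta> (init_forest Init) (F1 @ F2) run"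
    "pre (run [0]) = p" "post (run [length (F1 @ F2) - 1]) = q" by (elim fsE) auto
  have W: "valid_run \<delta> (init_forest Init) F1 run"
    "valid_run \<delta> (init_forest Init) F2 (\<lambda>v. run (shft (length F1) v))"
    "pre (run [length F1]) = post (run [length F1 - 1])"
    using V(1) ne1 ne2 valid_run_append by blast+
  have 1: "(p, post (run [length F1 - 1])) \<in> forest_sigs \<delta> Init F1"
    by (rule fsI[OF W(1)]) (simp_all add: V(2))
  have 2: "(post (run [length F1 - 1]), q) \<in> forest_sigs \<delta> Init F2"
    by (rule fsI[OF W(2)]) (use W(3) V(3) len_app[OF ne2, of F1] in simp_all)
  show "x \<in> fplus (forest_sigs \<delta> Init F1) (forest_sigs \<delta> Init F2)"
    using 1 2 x unfolding fplus_def by blast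
next
  fix x assume "x \<in> fplus (forest_sigs \<delta> Init F1) (forest_sigs \<delta> Init F2)"
  then obtain p q m where x: "x = (p, q)" "(p, m) \<in> forest_sigs \<delta> Init F1" "(m, q) \<in> forest_sigs \<delta> Init F2"
    unfolding fplus_def by blast
  from x(2) obtain r1 where R1: "valid_run \<delta> (init_forest Init) F1 r1" "pre (r1 [0]) = p"
    "post (r1 [length F1 - 1]) = m" by (elim fsE) auto
  from x(3) obtain r2 where R2: "valid_run \<delta> (init_forest Init) F2 r2" "pre (r2 [0]) = m"
    "post (r2 [length F2 - 1]) = q" by (elim fsE) auto
  have V: "valid_run \<delta> (init_forest Init) (F1 @ F2) (mrg (length F1) r1 r2)"
    by (rule append_ex[OF R1(1) R2(1)]) (use R1 R2 in simp)
  have "(p, q) \<in> forest_sigs \<delta> Init (F1 @ F2)"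
  proof (rule fsI[OF V])
    show "pre (mrg (length F1) r1 r2 [0]) = p" using ne1 R1(2) by simp
    show "post (mrg (length F1) r1 r2 [length (F1 @ F2) - 1]) = q"
      using R2(3) len_app[OF ne2, of F1] mrg_ge[of "length F1" r1 r2 "length F2 - 1" "[]"] by simp
  qed
  then show "x \<in> forest_sigs \<delta> Init (F1 @ F2)" using x by simp
qed

lemma sig_fc: assumes ne1: "F1 \<noteq> []" and h1: "holes F1 = 0" and ne2: "C \<noteq> []"
  shows "ctx_sigs \<delta> Init (F1 @ C) = fcplus (forest_sigs \<delta> Init F1) (ctx_sigs \<delta> Init C)"
proof (intro set_eqI iffI)
  fix x assume "x \<in> ctx_sigs \<delta> Init (F1 @ C)"
  then obtain q1 q3 q4 q5 where x: "x = ((q1, q3), (q4, q5))" "((q1, q3), (q4, q5)) \<in> ctx_sigs \<delta> Init (F1 @ C)"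
    by (metis prod.collapse)
  from x(2) obtain run hp where V: "valid_run (delta_ext \<delta>) (init_ext Init) (F1 @ C) run"
    and hp: "subf (F1 @ C) hp = Some Hole"
    and s: "pre (run [0]) = Some q1" "post (run [length (F1 @ C) - 1]) = Some q3" "pre (run hp) = Some q4" "post (run hp) = Some q5"
    by (elim csE) auto
  have W: "valid_run (delta_ext \<delta>) (init_ext Init) F1 run"
    "valid_run (delta_ext \<delta>) (init_ext Init) C (\<lambda>v. run (shft (length F1) v))"
    "pre (run [length F1]) = post (run [length F1 - 1])"
    using V ne1 ne2 valid_run_append by blast+
  have L: "valid_run \<delta> (init_forest Init) F1 (\<lambda>v. (the (pre (run v)), the (self (run v)), the (post (run v))))"
    "\<forall>v\<in>nodes F1. pre (run v) \<noteq> None \<and> post (run v) \<noteq> None"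
    using lift2[OF h1 W(1)] by blast+
  obtain q2 where q2: "post (run [length F1 - 1]) = Some q2"
    using L(2) root_node[of "length F1 - 1" F1] ne1 by fastforce
  have 1: "(q1, q2) \<in> forest_sigs \<delta> Init F1"
    by (rule fsI[OF L(1)]) (use s(1) q2 in simp_all)
  obtain i p where hpc: "hp = i # p" using hp by (cases hp) auto
  have "\<not> i < length F1"
  proof
    assume "i < length F1"
    then have "subf F1 hp = Some Hole" using hp hpc by (simp add: subf_append)
    then show False using hole_pos h1 by fastforce
  qed
  then have hp': "hp = ((i - length F1) + length F1) # p" using hpc by simp
  have 2: "((q2, q3), (q4, q5)) \<in> ctx_sigs \<delta> Init C"
  proof (rule csI[OF W(2), where hp="(i - length F1) # p"])
    show "subf C ((i - length F1) # p) = Some Hole" using hp hp' subf_shft by metis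
    show "pre (run (shft (length F1) [0])) = Some q2" using W(3) q2 by simp
    show "post (run (shft (length F1) [length C - 1])) = Some q3" using s(2) len_app[OF ne2, of F1] by simp
    show "pre (run (shft (length F1) ((i - length F1) # p))) = Some q4" using s(3) hp' by simp
    show "post (run (shft (length F1) ((i - length F1) # p))) = Some q5" using s(4) hp' by simp
  qed
  show "x \<in> fcplus (forest_sigs \<delta> Init F1) (ctx_sigs \<delta> Init C)"
    using 1 2 x unfolding fcplus_def by blast
next
  fix x assume "x \<in> fcplus (forest_sigs \<delta> Init F1) (ctx_sigs \<delta> Init C)"
  then obtain q1 q2 q3 q4 q5 where x: "x = ((q1, q3), (q4, q5))" "(q1, q2) \<in> forest_sigs \<delta> Init F1"
     "((q2, q3), (q4, q5)) \<in> ctx_sigs \<delta> Init C"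
    unfolding fcplus_def by blast
  from x(2) obtain r1 where R1: "valid_run \<delta> (init_forest Init) F1 r1" "pre (r1 [0]) = q1"
    "post (r1 [length F1 - 1]) = q2" by (elim fsE) auto
  from x(3) obtain r2 w where R2: "valid_run (delta_ext \<delta>) (init_ext Init) C r2" "subf C w = Some Hole"
    "pre (r2 [0]) = Some q2" "post (r2 [length C - 1]) = Some q3" "pre (r2 w) = Some q4" "post (r2 w) = Some q5"
    by (elim csE) auto
  let ?r1 = "\<lambda>v. (Some (pre (r1 v)), Some (self (r1 v)), Some (post (r1 v)))"
  have R1': "valid_run (delta_ext \<delta>) (init_ext Init) F1 ?r1" using lift1[OF R1(1)] .
  have V: "valid_run (delta_ext \<delta>) (init_ext Init) (F1 @ C) (mrg (length F1) ?r1 r2)"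
    by (rule append_ex[OF R1' R2(1)]) (use R1 R2 in simp)
  obtain j p where w: "w = j # p" using R2(2) by (cases w) auto
  have "((q1, q3), (q4, q5)) \<in> ctx_sigs \<delta> Init (F1 @ C)"
  proof (rule csI[OF V, where hp="(j + length F1) # p"])
    show "subf (F1 @ C) ((j + length F1) # p) = Some Hole" using R2(2) w subf_shft by metis
    show "pre (mrg (length F1) ?r1 r2 [0]) = Some q1" using ne1 R1(2) by simp
    show "post (mrg (length F1) ?r1 r2 [length (F1 @ C) - 1]) = Some q3"
      using R2(4) len_app[OF ne2, of F1] mrg_ge[of "length F1" ?r1 r2 "length C - 1" "[]"] by simp
    show "pre (mrg (length F1) ?r1 r2 ((j + length F1) # p)) = Some q4" using R2(5) w by simp
    show "post (mrg (length F1) ?r1 r2 ((j + length F1) # p)) = Some q5" using R2(6) w by simp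
  qed
  then show "x \<in> ctx_sigs \<delta> Init (F1 @ C)" using x by simp
qed

lemma sig_cf: assumes ne1: "C \<noteq> []" and ne2: "F2 \<noteq> []" and h2: "holes F2 = 0"
  shows "ctx_sigs \<delta> Init (C @ F2) = cfplus (ctx_sigs \<delta> Init C) (forest_sigs \<delta> Init F2)"
proof (intro set_eqI iffI)
  fix x assume "x \<in> ctx_sigs \<delta> Init (C @ F2)"
  then obtain q1 q5 q3 q4 where x: "x = ((q1, q5), (q3, q4))" "((q1, q5), (q3, q4)) \<in> ctx_sigs \<delta> Init (C @ F2)"
    by (metis prod.collapse)
  from x(2) obtain run hp where V: "valid_run (delta_ext \<delta>) (init_ext Init) (C @ F2) run"
    and hp: "subf (C @ F2) hp = Some Hole"
    and s: "pre (run [0]) = Some q1" "post (run [length (C @ F2) - 1]) = Some q5" "pre (run hp) = Some q3" "post (run hp) = Some q4"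
    by (elim csE) auto
  have W: "valid_run (delta_ext \<delta>) (init_ext Init) C run"
    "valid_run (delta_ext \<delta>) (init_ext Init) F2 (\<lambda>v. run (shft (length C) v))"
    "pre (run [length C]) = post (run [length C - 1])"
    using V ne1 ne2 valid_run_append by blast+
  have L: "valid_run \<delta> (init_forest Init) F2 (\<lambda>v. (the (pre (run (shft (length C) v))), the (self (run (shft (length C) v))), the (post (run (shft (length C) v)))))"
    using lift2[OF h2 W(2)] by blast
  obtain q2 where q2: "post (run [length C - 1]) = Some q2"
    using valid_node[OF W(1) root_node[of "length C - 1" C]] ne1 de_elim by fastforce
  obtain i p where hpc: "hp = i # p" using hp by (cases hp) auto
  have il: "i < length C"
  proof (rule ccontr)
    assume "\<not> i < length C"
    then have "subf F2 ((i - length C) # p) = Some Hole" using hp hpc by (simp add: subf_append)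
    then show False using hole_pos h2 by fastforce
  qed
  have 1: "((q1, q2), (q3, q4)) \<in> ctx_sigs \<delta> Init C"
  proof (rule csI[OF W(1), where hp=hp])
    show "subf C hp = Some Hole" using hp hpc il by (simp add: subf_append)
  qed (use s q2 in auto)
  have 2: "(q2, q5) \<in> forest_sigs \<delta> Init F2"
    by (rule fsI[OF L]) (use W(3) q2 s(2) len_app[OF ne2, of C] in simp_all)
  show "x \<in> cfplus (ctx_sigs \<delta> Init C) (forest_sigs \<delta> Init F2)"
    using 1 2 x unfolding cfplus_def by blast
next
  fix x assume "x \<in> cfplus (ctx_sigs \<delta> Init C) (forest_sigs \<delta> Init F2)"
  then obtain q1 q2 q3 q4 q5 where x: "x = ((q1, q5), (q3, q4))" "((q1, q2), (q3, q4)) \<in> ctx_sigs \<delta> Init C"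
     "(q2, q5) \<in> forest_sigs \<delta> Init F2"
    unfolding cfplus_def by blast
  from x(2) obtain r1 w where R1: "valid_run (delta_ext \<delta>) (init_ext Init) C r1" "subf C w = Some Hole"
    "pre (r1 [0]) = Some q1" "post (r1 [length C - 1]) = Some q2" "pre (r1 w) = Some q3" "post (r1 w) = Some q4"
    by (elim csE) auto
  from x(3) obtain r2 where R2: "valid_run \<delta> (init_forest Init) F2 r2" "pre (r2 [0]) = q2"
    "post (r2 [length F2 - 1]) = q5" by (elim fsE) auto
  let ?r2 = "\<lambda>v. (Some (pre (r2 v)), Some (self (r2 v)), Some (post (r2 v)))"
  have R2': "valid_run (delta_ext \<delta>) (init_ext Init) F2 ?r2" using lift1[OF R2(1)] .
  have V: "valid_run (delta_ext \<delta>) (init_ext Init) (C @ F2) (mrg (length C) r1 ?r2)"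
    by (rule append_ex[OF R1(1) R2']) (use R1 R2 in simp)
  obtain j p where w: "w = j # p" "j < length C" using R1(2) subf_hd by (cases w) fastforce+
  have "((q1, q5), (q3, q4)) \<in> ctx_sigs \<delta> Init (C @ F2)"
  proof (rule csI[OF V, where hp=w])
    show "subf (C @ F2) w = Some Hole" using R1(2) w by (simp add: subf_append)
    show "pre (mrg (length C) r1 ?r2 [0]) = Some q1" using ne1 R1(3) by simp
    show "post (mrg (length C) r1 ?r2 [length (C @ F2) - 1]) = Some q5"
      using R2(3) len_app[OF ne2, of C] mrg_ge[of "length C" r1 ?r2 "length F2 - 1" "[]"] by simp
    show "pre (mrg (length C) r1 ?r2 w) = Some q3" using R1(5) w by simp
    show "post (mrg (length C) r1 ?r2 w) = Some q4" using R1(6) w by simp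
  qed
  then show "x \<in> ctx_sigs \<delta> Init (C @ F2)" using x by simp
qed


lemma subst_box: "subst (box_ctx a) ts = [Node a ts]"
  by (simp add: subst_def box_ctx_def)

lemma box_context: "is_context (box_ctx a)"
  by (simp add: is_context_def holes_def box_ctx_def)

lemma holes_single: "holes [Node a ts] = holes ts" "holes [t] = holes_t t"
  by (simp_all add: holes_def)

lemma holes_Cons: "holes (t # F) = holes_t t + holes F"
  by (simp add: holes_def)

theorem lemma4p5:
  fixes \<delta> :: "('q::finite) trans set" and Init :: "('a::finite) \<Rightarrow> 'q set"
    and hF :: "'a forest \<Rightarrow> ('q \<times> 'q) set"
    and hC :: "'a forest \<Rightarrow> (('q \<times> 'q) \<times> ('q \<times> 'q)) set"
  assumes "is_hom hF hC"
    and "\<forall>a. hC (box_ctx a) = ctx_sigs \<delta> Init (box_ctx a)"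
  shows "(\<forall>F. is_forest F \<and> F \<noteq> [] \<longrightarrow> hF F = forest_sigs \<delta> Init F)
       \<and> (\<forall>C. is_context C \<longrightarrow> hC C = ctx_sigs \<delta> Init C)"
proof -
  have hom: "hF [] = Id \<and> hC [Hole] = Id
   \<and> (\<forall>F1 F2. is_forest F1 \<and> is_forest F2 \<longrightarrow> hF (F1 @ F2) = fplus (hF F1) (hF F2))
   \<and> (\<forall>C1 C2. is_context C1 \<and> is_context C2 \<longrightarrow> hC (subst C1 C2) = ccomp (hC C1) (hC C2))
   \<and> (\<forall>C F. is_context C \<and> is_forest F \<longrightarrow> hF (subst C F) = capp (hC C) (hF F))
   \<and> (\<forall>F C. is_forest F \<and> is_context C \<longrightarrow> hC (F @ C) = fcplus (hF F) (hC C))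
   \<and> (\<forall>C F. is_context C \<and> is_forest F \<longrightarrow> hC (C @ F) = cfplus (hC C) (hF F))"
    using assms(1) unfolding is_hom_def .
  note hom' = hom[THEN conjunct2, THEN conjunct2]
  have H0F: "hF [] = Id" using hom by (rule conjunct1)
  have H0C: "hC [Hole] = Id" using hom[THEN conjunct2] by (rule conjunct1)
  have Happ: "\<And>F1 F2. is_forest F1 \<Longrightarrow> is_forest F2 \<Longrightarrow> hF (F1 @ F2) = fplus (hF F1) (hF F2)"
    using hom'[THEN conjunct1] by blast
  have Hcc: "\<And>C1 C2. is_context C1 \<Longrightarrow> is_context C2 \<Longrightarrow> hC (subst C1 C2) = ccomp (hC C1) (hC C2)"
    using hom'[THEN conjunct2, THEN conjunct1] by blast
  have Hcapp: "\<And>C F. is_context C \<Longrightarrow> is_forest F \<Longrightarrow> hF (subst C F) = capp (hC C) (hF F)"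
    using hom'[THEN conjunct2, THEN conjunct2, THEN conjunct1] by blast
  have Hfc: "\<And>F C. is_forest F \<Longrightarrow> is_context C \<Longrightarrow> hC (F @ C) = fcplus (hF F) (hC C)"
    using hom'[THEN conjunct2, THEN conjunct2, THEN conjunct2, THEN conjunct1] by blast
  have Hcf: "\<And>C F. is_context C \<Longrightarrow> is_forest F \<Longrightarrow> hC (C @ F) = cfplus (hC C) (hF F)"
    using hom'[THEN conjunct2, THEN conjunct2, THEN conjunct2, THEN conjunct2] by blast
  have box: "\<And>a. hC (box_ctx a) = {((p, q), (r, s)). (p, s, q) \<in> \<delta> \<and> r \<in> Init a}"
    using assms(2) box_sigs by metis
  have main: "\<And>F. size_list size F < n \<Longrightarrow> (is_forest F \<and> F \<noteq> [] \<longrightarrow> hF F = forest_sigs \<delta> Init F)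
       \<and> (is_context F \<longrightarrow> hC F = ctx_sigs \<delta> Init F)" for n
  proof (induction n)
    case 0 then show ?case by simp
  next
    case (Suc n F)
    show ?case
    proof (cases F)
      case Nil then show ?thesis by (simp add: is_context_def holes_def)
    next
      case (Cons t F')
      show ?thesis
      proof (cases F')
        case Nil
        show ?thesis
        proof (cases t)
          case Hole
          then show ?thesis using Cons Nil H0C by (simp add: is_forest_def holes_def sig_hole)
        next
          case (Node a ts)
          have sz: "size_list size ts < n" using Suc.prems Cons Nil Node by simp
          have F: "F = subst (box_ctx a) ts" using Cons Nil Node by (simp add: subst_box)
          have fo: "hF F = forest_sigs \<delta> Init F" if fF: "is_forest F"
          proof -
            have fts: "is_forest ts" using fF Cons Nil Node by (simp add: is_forest_def holes_def)
            have e: "hF F = capp (hC (box_ctx a)) (hF ts)" using F Hcapp[OF box_context[of a] fts] by simp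
            show ?thesis
            proof (cases "ts = []")
              case True
              then show ?thesis using e H0F Cons Nil Node True by (auto simp: box sig_leaf capp_def)
            next
              case False
              then have "hF ts = forest_sigs \<delta> Init ts" using Suc.IH[OF sz] fts by blast
              then show ?thesis using e Cons Nil Node by (auto simp: box capp_def sig_node[OF False])
            qed
          qed
          have co: "hC F = ctx_sigs \<delta> Init F" if cF: "is_context F"
          proof -
            have cts: "is_context ts" using cF Cons Nil Node by (simp add: is_context_def holes_def)
            then have ne: "ts \<noteq> []" by (auto simp: is_context_def holes_def)
            have e: "hC F = ccomp (hC (box_ctx a)) (hC ts)" using F Hcc[OF box_context[of a] cts] by simp
            have "hC ts = ctx_sigs \<delta> Init ts" using Suc.IH[OF sz] cts by blast
            then show ?thesis using e Cons Nil Node by (auto simp: box ccomp_def sig_cnode[OF ne]; blast)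
          qed
          show ?thesis using fo co by blast
        qed
      next
        case (Cons t' rest)
        have Fs: "F = [t] @ F'" using \<open>F = t # F'\<close> by simp
        have ne: "F' \<noteq> []" using Cons by simp
        have sz1: "size_list size [t] < n" using Suc.prems \<open>F = t # F'\<close> Cons by simp
        have sz2: "size_list size F' < n" using Suc.prems \<open>F = t # F'\<close> by simp
        have hF: "holes F = holes_t t + holes F'" using \<open>F = t # F'\<close> holes_Cons by simp
        have fo: "hF F = forest_sigs \<delta> Init F" if fF: "is_forest F"
        proof -
          have f1: "is_forest [t]" "is_forest F'" using fF hF by (simp_all add: is_forest_def holes_single)
          have "hF [t] = forest_sigs \<delta> Init [t]" "hF F' = forest_sigs \<delta> Init F'"
            using Suc.IH[OF sz1] Suc.IH[OF sz2] f1 ne by blast+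
          then show ?thesis using Fs Happ[OF f1] sig_app[OF _ ne, of "[t]", where \<delta>=\<delta> and Init=Init] by simp
        qed
        have co: "hC F = ctx_sigs \<delta> Init F" if cF: "is_context F"
        proof (cases "holes_t t = 0")
          case True
          have f1: "is_forest [t]" "is_context F'" using cF hF True by (simp_all add: is_forest_def is_context_def holes_single)
          have "hF [t] = forest_sigs \<delta> Init [t]" "hC F' = ctx_sigs \<delta> Init F'"
            using Suc.IH[OF sz1] Suc.IH[OF sz2] f1 by blast+
          then show ?thesis using Fs Hfc[OF f1] sig_fc[OF _ _ ne, of "[t]", where \<delta>=\<delta> and Init=Init] True by (simp add: holes_single)
        next
          case False
          have f1: "is_context [t]" "is_forest F'" using cF hF False by (simp_all add: is_forest_def is_context_def holes_single)
          have "hC [t] = ctx_sigs \<delta> Init [t]" "hF F' = forest_sigs \<delta> Init F'"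
            using Suc.IH[OF sz1] Suc.IH[OF sz2] f1 ne by blast+
          then show ?thesis using Fs Hcf[OF f1] sig_cf[OF _ ne, of "[t]", where \<delta>=\<delta> and Init=Init] f1(2) by (simp add: is_forest_def)
        qed
        show ?thesis using fo co by blast
      qed
    qed
  qed
  have all: "(is_forest F \<and> F \<noteq> [] \<longrightarrow> hF F = forest_sigs \<delta> Init F)
       \<and> (is_context F \<longrightarrow> hC F = ctx_sigs \<delta> Init F)" for F
    using main[of F "Suc (size_list size F)"] by simp
  show ?thesis using all by blast
qed

end
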